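(* For any Hermitian matrices $P$ and $Q$ of the same size, $$|\mathrm{Tr}(\zeta(P+Q)-\zeta(P))|\le2\big(\|P\|_2\|Q\|_2+\|Q\|_2^2\big).$$
   Context: $\zeta:\mathbb{R}\to\mathbb{R}$ is $\zeta(x)=x^2$ for $x\le0$ and $\zeta(x)=0$ otherwise, applied to Hermitian matrices via the spectral decomposition. $\|\cdot\|_2$ is the (unnormalized) Schatten 2-norm (Frobenius norm). *)

theory Defs
  imports "HOL-Analysis.Analysis"
begin

definition cmat_adj :: "complex^'n^'n \<Rightarrow> complex^'n^'n" where
  "cmat_adj A = (\<chi> i j. cnj (A $ j $ i))"

definition hermitian :: "complex^'n^'n \<Rightarrow> bool" where
  "hermitian A \<longleftrightarrow> cmat_adj A = A"

definition unitary :: "complex^'n^'n \<Rightarrow> bool" where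
  "unitary U \<longleftrightarrow> cmat_adj U ** U = mat 1"

definition rdiag :: "real^'n \<Rightarrow> complex^'n^'n" where
  "rdiag d = (\<chi> i j. if i = j then complex_of_real (d $ i) else 0)"

definition matfun :: "(real \<Rightarrow> real) \<Rightarrow> complex^'n^'n \<Rightarrow> complex^'n^'n" where
  "matfun f A = (SOME B. \<exists>U d. unitary U \<and> A = U ** rdiag d ** cmat_adj U \<and>
                          B = U ** rdiag (\<chi> i. f (d $ i)) ** cmat_adj U)"

definition zeta :: "real \<Rightarrow> real" where
  "zeta x = (if x \<le> 0 then x ^ 2 else 0)"

text \<open>Unnormalized Schatten 2-norm (Frobenius norm).\<close>
definition frob :: "complex^'n^'n \<Rightarrow> real" where
  "frob A = sqrt (\<Sum>i\<in>UNIV. \<Sum>j\<in>UNIV. (cmod (A $ i $ j))^2)"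

end

theory Submission
  imports Defs
begin
definition cinner :: "complex^'n \<Rightarrow> complex^'n \<Rightarrow> complex" where
  "cinner x y = (\<Sum>i\<in>UNIV. cnj (x$i) * y$i)"

lemma herm_entry: "hermitian A \<Longrightarrow> A$i$j = cnj (A$j$i)"
  unfolding hermitian_def cmat_adj_def by (metis vec_lambda_beta)

lemma herm_cinner:
  assumes "hermitian A" shows "cinner x (A *v y) = cinner (A *v x) y"
proof -
  have "cinner x (A *v y) = (\<Sum>i\<in>UNIV. \<Sum>j\<in>UNIV. cnj (x$i) * A$i$j * y$j)"
    by (simp add: cinner_def matrix_vector_mult_def sum_distrib_left mult.assoc)
  also have "\<dots> = (\<Sum>j\<in>UNIV. \<Sum>i\<in>UNIV. cnj (x$i) * A$i$j * y$j)" by (rule sum.swap)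
  also have "\<dots> = (\<Sum>j\<in>UNIV. \<Sum>i\<in>UNIV. cnj (A$j$i) * cnj (x$i) * y$j)"
  proof (intro sum.cong refl)
    fix i j
    have "A$i$j = cnj (A$j$i)" by (rule herm_entry[OF assms])
    then show "cnj (x$i) * A$i$j * y$j = cnj (A$j$i) * cnj (x$i) * y$j" by simp
  qed
  also have "\<dots> = cinner (A *v x) y"
    by (simp add: cinner_def matrix_vector_mult_def sum_distrib_right)
  finally show ?thesis .
qed

lemma inner_cinner: "inner x y = Re (cinner x y)"
  by (simp add: inner_vec_def cinner_def inner_complex_def Re_sum)

lemma cinner_split: "cinner x y = complex_of_real (inner x y) + \<i> * complex_of_real (inner (\<i> *s x) y)"
  by (simp add: complex_eq_iff inner_vec_def cinner_def inner_complex_def Re_sum Im_sum sum_negf algebra_simps sum.distrib[symmetric] sum_subtractf[symmetric])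

lemma cinner_self: "cinner x x = complex_of_real ((norm x)^2)"
proof -
  have "(norm x)^2 = (\<Sum>i\<in>UNIV. (cmod (x$i))^2)"
    by (simp add: norm_vec_def L2_set_def sum_nonneg)
  moreover have "cnj (x$i) * x$i = complex_of_real ((cmod (x$i))^2)" for i
    by (metis complex_norm_square mult.commute of_real_power)
  ultimately show ?thesis by (simp add: cinner_def)
qed

lemma cinner_cnj: "cinner y x = cnj (cinner x y)"
  by (simp add: cinner_def mult.commute)

lemma cinner_add_right: "cinner v (x + y) = cinner v x + cinner v y"
  by (simp add: cinner_def algebra_simps sum.distrib)
lemma cinner_diff_right: "cinner v (x - y) = cinner v x - cinner v y"
  by (simp add: cinner_def algebra_simps sum_subtractf)
lemma cinner_scaleR_right: "cinner v (c *\<^sub>R y) = complex_of_real c * cinner v y"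
  by (simp add: cinner_def sum_distrib_left) (simp add: scaleR_conv_of_real algebra_simps)
lemma cinner_scaleR_left: "cinner (c *\<^sub>R v) y = complex_of_real c * cinner v y"
  by (simp add: cinner_def sum_distrib_left) (simp add: scaleR_conv_of_real algebra_simps)

lemma herm_inner:
  assumes "hermitian A" shows "inner x (A *v y) = inner (A *v x) y"
  by (simp add: inner_cinner herm_cinner[OF assms])

lemma quad_lemma:
  fixes a b :: real
  assumes "\<And>t. 0 \<le> a * t + b * t^2"
  shows "a = 0"
proof (rule ccontr)
  assume "a \<noteq> 0"
  define c where "c = \<bar>b\<bar> + 1"
  have c: "c > 0" "\<bar>b\<bar> \<le> c" by (auto simp: c_def)
  define t where "t = - a / (2 * c)"
  have 1: "0 \<le> a * t + b * t^2" by (rule assms)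
  have 2: "b * t^2 \<le> c * t^2" using c by (intro mult_right_mono) auto
  have 3: "a * t + c * t^2 = - (a^2) / (4*c)" using c
    by (simp add: t_def field_simps power2_eq_square)
  have 4: "- (a^2) / (4*c) < 0" using c \<open>a \<noteq> 0\<close> by (intro divide_neg_pos) auto
  show False using 1 2 3 4 by linarith
qed

lemma cinner_zero_iff: "cinner v x = 0 \<longleftrightarrow> inner v x = 0 \<and> inner (\<i> *s v) x = 0"
  by (subst cinner_split) (simp add: complex_eq_iff)

lemma closed_W: "closed {x::complex^'n. \<forall>v\<in>set vs. cinner v x = 0}"
proof -
  have "{x::complex^'n. \<forall>v\<in>set vs. cinner v x = 0} =
     (\<Inter>v\<in>set vs. {x. inner v x = 0} \<inter> {x. inner (\<i> *s v) x = 0})"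
    by (auto simp: cinner_zero_iff)
  moreover have "closed \<dots>"
    by (intro closed_INT ballI closed_Int closed_hyperplane)
  ultimately show ?thesis by simp
qed

lemma W_nonzero:
  fixes vs :: "(complex^'n) list"
  assumes "length vs < CARD('n)"
  shows "\<exists>z. z \<noteq> 0 \<and> (\<forall>v\<in>set vs. cinner v z = 0)"
proof -
  define S where "S = set vs \<union> (\<lambda>v. \<i> *s v) ` set vs"
  have "card S \<le> card (set vs) + card ((\<lambda>v. \<i> *s v) ` set vs)"
    unfolding S_def by (rule card_Un_le)
  also have "\<dots> \<le> 2 * length vs"
    using card_length[of vs] card_image_le[of "set vs" "\<lambda>v. \<i> *s v"] by simp
  finally have "card S \<le> 2 * length vs" .
  moreover have "dim S \<le> card S" by (rule dim_le_card') (simp add: S_def)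
  ultimately have dS: "dim S < DIM(complex^'n)" using assms by (simp add: DIM_cart)
  obtain z where z: "z \<noteq> 0" "\<And>y. y \<in> span S \<Longrightarrow> orthogonal z y"
    using orthogonal_to_subspace_exists[OF dS] by blast
  have "cinner v z = 0" if "v \<in> set vs" for v
  proof -
    have "orthogonal z v" "orthogonal z (\<i> *s v)"
      using that by (auto intro!: z(2) span_base simp: S_def)
    then show ?thesis by (simp add: cinner_zero_iff orthogonal_def inner_commute)
  qed
  with z show ?thesis by blast
qed

lemma mvs: "A *v (c *\<^sub>R x) = c *\<^sub>R (A *v (x::complex^'n))"
  by (simp add: vec_eq_iff matrix_vector_mult_def scaleR_sum_right)

lemma eig_step:
  fixes A :: "complex^'n^'n" and vs :: "(complex^'n) list"
  assumes herm: "hermitian A" and ev: "\<forall>v\<in>set vs. \<exists>\<mu>. A *v v = \<mu> *\<^sub>R v"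
    and len: "length vs < CARD('n)"
  shows "\<exists>x \<mu>. norm x = 1 \<and> A *v x = \<mu> *\<^sub>R x \<and> (\<forall>v\<in>set vs. cinner v x = 0)"
proof -
  define W where "W = {x::complex^'n. \<forall>v\<in>set vs. cinner v x = 0}"
  have W_add: "x + y \<in> W" if "x \<in> W" "y \<in> W" for x y
    using that by (simp add: W_def cinner_add_right)
  have W_scale: "c *\<^sub>R x \<in> W" if "x \<in> W" for x c
    using that by (simp add: W_def cinner_scaleR_right)
  obtain z where z: "z \<noteq> 0" "z \<in> W" using W_nonzero[OF len] unfolding W_def by blast
  define K where "K = W \<inter> sphere 0 1"
  have cK: "compact K" unfolding K_def W_def
    by (intro closed_Int_compact closed_W compact_sphere)
  have "(1/norm z) *\<^sub>R z \<in> K" using z by (auto simp: K_def W_scale)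
  then have neK: "K \<noteq> {}" by blast
  define f where "f x = inner x (A *v x)" for x
  have "continuous_on K f" unfolding f_def
    by (intro continuous_intros matrix_vector_mult_linear_continuous_on)
  then obtain x0 where x0: "x0 \<in> K" "\<And>y. y \<in> K \<Longrightarrow> f y \<le> f x0"
    using continuous_attains_sup[OF cK neK] by blast
  define lam where "lam = f x0"
  have x0W: "x0 \<in> W" and nx0: "norm x0 = 1" using x0(1) by (auto simp: K_def)
  have fscale: "f (c *\<^sub>R y) = c^2 * f y" for c y
    by (simp add: f_def mvs power2_eq_square)
  have bound: "f y \<le> lam * (norm y)^2" if "y \<in> W" for y
  proof (cases "y = 0")
    case True then show ?thesis by (simp add: f_def)
  next
    case False
    have "(1/norm y) *\<^sub>R y \<in> K" using False that by (auto simp: K_def W_scale)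
    then have "f ((1/norm y) *\<^sub>R y) \<le> lam" using x0(2) lam_def by blast
    then have "f y / (norm y)^2 \<le> lam" by (simp add: fscale power_divide)
    then show ?thesis using False by (simp add: divide_le_eq mult.commute)
  qed
  define r where "r = A *v x0 - lam *\<^sub>R x0"
  have rW: "r \<in> W" unfolding W_def mem_Collect_eq
  proof
    fix v assume v: "v \<in> set vs"
    then obtain \<mu> where mu: "A *v v = \<mu> *\<^sub>R v" using ev by blast
    have cv: "cinner v x0 = 0" using x0W v by (simp add: W_def)
    have 1: "cinner v r = cinner v (A *v x0) - complex_of_real lam * cinner v x0"
      by (simp add: r_def cinner_diff_right cinner_scaleR_right)
    have 2: "cinner v (A *v x0) = cinner (A *v v) x0" by (rule herm_cinner[OF herm])
    have 3: "cinner (A *v v) x0 = 0" by (simp add: mu cinner_scaleR_left cv)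
    show "cinner v r = 0" using 1 2 3 by (simp add: cv)
  qed
  have orth: "inner y r = 0" if yW: "y \<in> W" for y
  proof -
  have q: "0 \<le> (-2 * inner y r) * t + (lam * (norm y)^2 - f y) * t^2" for t :: real
  proof -
    have "x0 + t *\<^sub>R y \<in> W" using x0W yW W_add W_scale by blast
    then have b: "f (x0 + t *\<^sub>R y) \<le> lam * (norm (x0 + t *\<^sub>R y))^2" by (rule bound)
    have sa: "inner x0 (A *v y) = inner y (A *v x0)"
      by (metis herm_inner[OF herm] inner_commute)
    have e1a: "A *v (x0 + t *\<^sub>R y) = A *v x0 + t *\<^sub>R (A *v y)"
      by (simp add: matrix_vector_right_distrib mvs)
    have e1b: "f (x0 + t *\<^sub>R y) = inner x0 (A *v x0) + t * inner x0 (A *v y) + t * inner y (A *v x0) + t * (t * inner y (A *v y))"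
      unfolding f_def e1a inner_add_left inner_add_right inner_scaleR_left inner_scaleR_right by (simp add: distrib_left)
    have e1: "f (x0 + t *\<^sub>R y) = lam + 2 * t * inner y (A *v x0) + t^2 * f y"
      unfolding e1b sa by (simp add: f_def lam_def power2_eq_square)
    have e2a: "(norm (x0 + t *\<^sub>R y))^2 = inner x0 x0 + t * inner x0 y + t * inner y x0 + t * (t * inner y y)"
      unfolding power2_norm_eq_inner inner_add_left inner_add_right inner_scaleR_left inner_scaleR_right by (simp add: distrib_left)
    have e2: "(norm (x0 + t *\<^sub>R y))^2 = 1 + 2 * t * inner y x0 + t^2 * (norm y)^2"
      unfolding e2a using nx0 by (simp add: power2_norm_eq_inner[symmetric] inner_commute power2_eq_square)
    have e3: "inner y r = inner y (A *v x0) - lam * inner y x0"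
      by (simp add: r_def inner_diff_right)
    show "0 \<le> (-2 * inner y r) * t + (lam * (norm y)^2 - f y) * t^2"
      using b unfolding e1 e2 e3 by (simp add: algebra_simps)
  qed
  have "-2 * inner y r = 0" by (rule quad_lemma[OF q])
  then show ?thesis by simp
  qed
  have "r = 0" using orth[OF rW] by simp
  then have "A *v x0 = lam *\<^sub>R x0" by (simp add: r_def)
  moreover have "\<forall>v\<in>set vs. cinner v x0 = 0" using x0W by (simp add: W_def)
  ultimately show ?thesis using nx0 by blast
qed

lemma eig_list:
  fixes A :: "complex^'n^'n"
  assumes herm: "hermitian A"
  shows "k \<le> CARD('n) \<Longrightarrow> \<exists>vs. length vs = k \<and> (\<forall>v\<in>set vs. norm v = 1 \<and> (\<exists>\<mu>. A *v v = \<mu> *\<^sub>R v))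
     \<and> (\<forall>i<k. \<forall>j<k. i \<noteq> j \<longrightarrow> cinner (vs!i) (vs!j) = 0)"
proof (induction k)
  case 0 then show ?case by simp
next
  case (Suc k)
  then obtain vs where vs: "length vs = k" "\<forall>v\<in>set vs. norm v = 1 \<and> (\<exists>\<mu>. A *v v = \<mu> *\<^sub>R v)"
     "\<forall>i<k. \<forall>j<k. i \<noteq> j \<longrightarrow> cinner (vs!i) (vs!j) = 0" by auto
  obtain x \<mu> where x: "norm x = 1" "A *v x = \<mu> *\<^sub>R x" "\<forall>v\<in>set vs. cinner v x = 0"
    using eig_step[OF herm, of vs] vs Suc.prems by auto
  define ws where "ws = vs @ [x]"
  have "length ws = Suc k" using vs by (simp add: ws_def)
  moreover have "\<forall>v\<in>set ws. norm v = 1 \<and> (\<exists>\<mu>. A *v v = \<mu> *\<^sub>R v)"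
    using vs x by (auto simp: ws_def)
  moreover have "\<forall>i<Suc k. \<forall>j<Suc k. i \<noteq> j \<longrightarrow> cinner (ws!i) (ws!j) = 0"
  proof (intro allI impI)
    fix i j assume ij: "i < Suc k" "j < Suc k" "i \<noteq> j"
    show "cinner (ws!i) (ws!j) = 0"
    proof (cases "i < k")
      case True
      show ?thesis
      proof (cases "j < k")
        case True
        then show ?thesis using \<open>i < k\<close> ij vs by (simp add: ws_def nth_append)
      next
        case False
        then have "j = k" using ij by simp
        then show ?thesis using \<open>i < k\<close> vs x by (simp add: ws_def nth_append)
      qed
    next
      case False
      then have ik: "i = k" using ij by simp
      then have jk: "j < k" using ij by simp
      have "cinner (vs!j) x = 0" using x(3) jk vs(1) by simp
      then have "cinner x (vs!j) = 0" by (metis cinner_cnj complex_cnj_zero)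
      then show ?thesis using ik jk vs by (simp add: ws_def nth_append)
    qed
  qed
  ultimately show ?case by blast
qed

lemma sum_delta_mult: fixes f :: "'n::finite \<Rightarrow> complex"
  shows "(\<Sum>k\<in>UNIV. f k * (if k = j then g k else 0)) = f j * g j"
proof -
  have "(\<Sum>k\<in>UNIV. f k * (if k = j then g k else 0)) = (\<Sum>k\<in>UNIV. if k = j then f k * g k else 0)"
    by (intro sum.cong) auto
  also have "\<dots> = f j * g j" by (simp add: sum.delta)
  finally show ?thesis .
qed

lemma spectral:
  fixes A :: "complex^'n^'n"
  assumes herm: "hermitian A"
  shows "\<exists>U d. unitary U \<and> A = U ** rdiag d ** cmat_adj U"
proof -
  obtain vs where vs: "length vs = CARD('n)" "\<forall>v\<in>set vs. norm v = 1 \<and> (\<exists>\<mu>. A *v v = \<mu> *\<^sub>R v)"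
     "\<forall>i<CARD('n). \<forall>j<CARD('n). i \<noteq> j \<longrightarrow> cinner (vs!i) (vs!j) = 0"
    using eig_list[OF herm, of "CARD('n)"] by auto
  obtain h :: "'n \<Rightarrow> nat" where h: "bij_betw h UNIV {0..<CARD('n)}"
    using ex_bij_betw_finite_nat[of "UNIV::'n set"] by auto
  have hlt: "h j < CARD('n)" for j using bij_betw_apply[OF h] by auto
  have hinj: "h j = h k \<Longrightarrow> j = k" for j k
    using bij_betw_imp_inj_on[OF h] by (auto dest: injD)
  have mem: "vs ! h j \<in> set vs" for j using hlt vs(1) by simp
  define U where "U = (\<chi> i j. (vs ! h j) $ i)"
  define d where "d = (\<chi> j. SOME \<mu>. A *v (vs ! h j) = \<mu> *\<^sub>R (vs ! h j))"
  have eig: "A *v (vs!h j) = d$j *\<^sub>R (vs!h j)" for j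
  proof -
    have "\<exists>\<mu>. A *v (vs!h j) = \<mu> *\<^sub>R (vs!h j)" using vs(2) mem by blast
    then show ?thesis unfolding d_def vec_lambda_beta by (rule someI_ex)
  qed
  have UU: "cmat_adj U ** U = mat 1"
  proof -
    have "(cmat_adj U ** U)$j$k = mat 1 $ j $ k" for j k
    proof -
      have "(cmat_adj U ** U)$j$k = cinner (vs!h j) (vs!h k)"
        by (simp add: matrix_matrix_mult_def cmat_adj_def U_def cinner_def)
      also have "\<dots> = (if j = k then 1 else 0)"
      proof (cases "j = k")
        case True then show ?thesis using vs(2) mem by (simp add: cinner_self)
      next
        case False
        then have "h j \<noteq> h k" using hinj by blast
        then show ?thesis using vs(3) hlt[of j] hlt[of k] False by simp
      qed
      finally show ?thesis by (simp add: mat_def)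
    qed
    then show ?thesis by (simp add: vec_eq_iff)
  qed
  have AU: "A ** U = U ** rdiag d"
  proof -
    have "(A ** U)$i$j = (U ** rdiag d)$i$j" for i j
    proof -
      have "(A ** U)$i$j = (A *v (vs!h j))$i"
        by (simp add: matrix_matrix_mult_def matrix_vector_mult_def U_def)
      also have "\<dots> = complex_of_real (d$j) * U$i$j" by (simp add: eig U_def) (simp add: scaleR_conv_of_real)
      also have "\<dots> = (U ** rdiag d)$i$j"
        by (simp add: matrix_matrix_mult_def rdiag_def sum_delta_mult mult.commute)
      finally show ?thesis .
    qed
    then show ?thesis by (simp add: vec_eq_iff)
  qed
  have UU': "U ** cmat_adj U = mat 1" using UU matrix_left_right_inverse by blast
  have "A = A ** (U ** cmat_adj U)" by (simp add: UU' matrix_mul_rid)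
  also have "\<dots> = U ** rdiag d ** cmat_adj U" by (simp add: matrix_mul_assoc AU)
  finally have "A = U ** rdiag d ** cmat_adj U" .
  moreover have "unitary U" using UU by (simp add: unitary_def)
  ultimately show ?thesis by blast
qed

lemma adj_mult: "cmat_adj (A ** B) = cmat_adj B ** cmat_adj (A::complex^'n^'n)"
  by (simp add: vec_eq_iff cmat_adj_def matrix_matrix_mult_def mult.commute)
lemma adj_adj: "cmat_adj (cmat_adj A) = A"
  by (simp add: vec_eq_iff cmat_adj_def)
lemma unitary_right: "unitary U \<Longrightarrow> U ** cmat_adj U = mat 1"
  unfolding unitary_def using matrix_left_right_inverse by blast
lemma unitary_adj: "unitary U \<Longrightarrow> unitary (cmat_adj U)"
  unfolding unitary_def adj_adj using matrix_left_right_inverse by blast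

lemma diag_right_entry: "(U ** rdiag e)$i$k = U$i$k * complex_of_real (e$k)"
  by (simp add: matrix_matrix_mult_def rdiag_def sum_delta_mult)

lemma conj_entry: "(U ** rdiag e ** W)$i$j = (\<Sum>k\<in>UNIV. U$i$k * complex_of_real (e$k) * W$k$j)"
  by (simp add: matrix_matrix_mult_def[of "U ** rdiag e"] diag_right_entry)

lemma conj_diff: "U ** rdiag a ** W - U ** rdiag b ** W = U ** rdiag (a - b) ** W"
  by (simp add: vec_eq_iff conj_entry sum_subtractf[symmetric] algebra_simps)

lemma trace_conj:
  assumes "unitary U"
  shows "trace (U ** rdiag d ** cmat_adj U) = (\<Sum>i\<in>UNIV. complex_of_real (d$i))"
proof -
  have "trace (U ** rdiag d ** cmat_adj U) = trace (cmat_adj U ** (U ** rdiag d))"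
    by (rule trace_mul_sym)
  also have "\<dots> = trace (rdiag d)"
    using assms by (simp add: matrix_mul_assoc unitary_def matrix_mul_lid)
  also have "\<dots> = (\<Sum>i\<in>UNIV. complex_of_real (d$i))"
    by (simp add: trace_def rdiag_def)
  finally show ?thesis .
qed

lemma vec_normsq: "(norm (x::'a::real_normed_vector^'n))^2 = (\<Sum>i\<in>UNIV. (norm (x$i))^2)"
  by (simp add: norm_vec_def L2_set_def sum_nonneg)

lemma normsq_entries: "(norm (A::complex^'n^'n))^2 = (\<Sum>i\<in>UNIV. \<Sum>j\<in>UNIV. (cmod (A$i$j))^2)"
  by (simp add: vec_normsq)

lemma frob_eq: "frob A = norm A"
  by (simp add: frob_def normsq_entries[symmetric])

lemma cnj_mult_self: "cnj z * z = complex_of_real ((cmod z)^2)"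
  by (metis complex_norm_square mult.commute of_real_power)

lemma normsq_trace: "(norm (A::complex^'n^'n))^2 = Re (trace (cmat_adj A ** A))"
proof -
  have "Re (trace (cmat_adj A ** A)) = (\<Sum>i\<in>UNIV. \<Sum>k\<in>UNIV. (cmod (A$k$i))^2)"
    by (simp add: trace_def matrix_matrix_mult_def cmat_adj_def cnj_mult_self Re_sum)
  also have "\<dots> = (\<Sum>k\<in>UNIV. \<Sum>i\<in>UNIV. (cmod (A$k$i))^2)" by (rule sum.swap)
  finally show ?thesis by (simp add: normsq_entries)
qed

lemma norm_conj:
  assumes "unitary V"
  shows "norm (cmat_adj V ** B ** V) = norm B"
proof -
  have VV: "V ** cmat_adj V = mat 1" using unitary_right[OF assms] .
  have "cmat_adj (cmat_adj V ** B ** V) ** (cmat_adj V ** B ** V)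
      = cmat_adj V ** (cmat_adj B ** ((V ** cmat_adj V) ** B)) ** V"
    by (simp add: adj_mult adj_adj matrix_mul_assoc)
  also have "\<dots> = cmat_adj V ** (cmat_adj B ** B) ** V" by (simp add: VV matrix_mul_lid)
  finally have 1: "cmat_adj (cmat_adj V ** B ** V) ** (cmat_adj V ** B ** V) = cmat_adj V ** (cmat_adj B ** B) ** V" .
  have "trace (cmat_adj V ** (cmat_adj B ** B) ** V) = trace (V ** (cmat_adj V ** (cmat_adj B ** B)))"
    by (rule trace_mul_sym)
  also have "\<dots> = trace (cmat_adj B ** B)" by (simp add: matrix_mul_assoc VV matrix_mul_lid)
  finally have "(norm (cmat_adj V ** B ** V))^2 = (norm B)^2"
    by (simp add: normsq_trace 1)
  then show ?thesis by (simp add: power2_eq_iff_nonneg)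
qed

lemma norm_conj':
  assumes "unitary U"
  shows "norm (U ** B ** cmat_adj U) = norm B"
  using norm_conj[OF unitary_adj[OF assms], of B] by (simp add: adj_adj)

lemma norm_rdiag: "(norm (rdiag e))^2 = (\<Sum>i\<in>UNIV. (e$i)^2)"
proof -
  have "(\<Sum>j\<in>UNIV. (cmod (rdiag e $ i $ j))^2) = (e$i)^2" for i
  proof -
    have "(\<Sum>j\<in>UNIV. (cmod (rdiag e $ i $ j))^2) = (\<Sum>j\<in>UNIV. if i = j then (e$i)^2 else 0)"
      by (intro sum.cong) (auto simp: rdiag_def)
    then show ?thesis by simp
  qed
  then show ?thesis by (simp add: normsq_entries)
qed

lemma diag_le_norm: "(\<Sum>i\<in>UNIV. (cmod (A$i$i))^2) \<le> (norm (A::complex^'n^'n))^2"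
  unfolding normsq_entries
  by (intro sum_mono member_le_sum) auto

lemma adj_add: "cmat_adj (A + B) = cmat_adj A + cmat_adj (B::complex^'n^'n)"
  by (simp add: vec_eq_iff cmat_adj_def)

lemma mat_diff_ldistrib: "(C::complex^'n^'n) ** (A - B) = C ** A - C ** B"
  by (simp add: vec_eq_iff matrix_matrix_mult_def sum_subtractf algebra_simps)
lemma mat_diff_rdistrib: "(A - B) ** (C::complex^'n^'n) = A ** C - B ** C"
  by (simp add: vec_eq_iff matrix_matrix_mult_def sum_subtractf algebra_simps)

lemma conj_diag_entry: "(B ** rdiag e ** cmat_adj B)$i$i = complex_of_real (\<Sum>k\<in>UNIV. e$k * (cmod (B$i$k))^2)"
proof -
  have "(B ** rdiag e ** cmat_adj B)$i$i = (\<Sum>k\<in>UNIV. complex_of_real (e$k) * (cnj (B$i$k) * B$i$k))"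
    by (simp add: conj_entry cmat_adj_def algebra_simps)
  then show ?thesis by (simp add: cnj_mult_self)
qed

lemma zeta_le:
  assumes y: "y \<ge> 0" shows "zeta d \<le> (d - y)^2"
proof (cases "d \<le> 0")
  case True
  have "0 \<le> y * (y - 2*d)" using y True by (intro mult_nonneg_nonneg) auto
  moreover have "(d - y)^2 = d^2 + y * (y - 2*d)" by (simp add: power2_eq_square algebra_simps)
  ultimately show ?thesis using True by (simp add: zeta_def)
next
  case False then show ?thesis by (simp add: zeta_def)
qed

lemma rdiag_zero: "U ** rdiag 0 ** W = (0::complex^'n^'n)"
  by (simp add: vec_eq_iff conj_entry)

lemma lower:
  assumes V: "unitary V" and A: "A = V ** rdiag d ** cmat_adj V" and U: "unitary U"
    and e: "\<And>k. e$k \<ge> 0"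
  shows "(\<Sum>i\<in>UNIV. zeta (d$i)) \<le> (norm (A - U ** rdiag e ** cmat_adj U))^2"
proof -
  define W where "W = cmat_adj V ** U"
  have VV: "cmat_adj V ** V = mat 1" using V by (simp add: unitary_def)
  have 1: "cmat_adj V ** A ** V = rdiag d"
    by (simp add: A matrix_mul_assoc VV matrix_mul_lid) (simp add: matrix_mul_assoc[symmetric] VV matrix_mul_rid)
  have aW: "cmat_adj W = cmat_adj U ** V" by (simp add: W_def adj_mult adj_adj)
  have 2: "cmat_adj V ** (U ** rdiag e ** cmat_adj U) ** V = W ** rdiag e ** cmat_adj W"
    unfolding aW by (simp add: W_def matrix_mul_assoc)
  define M where "M = cmat_adj V ** (A - U ** rdiag e ** cmat_adj U) ** V"
  have M: "M = rdiag d - W ** rdiag e ** cmat_adj W"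
    unfolding M_def mat_diff_ldistrib mat_diff_rdistrib 1 2 by simp
  have nM: "norm M = norm (A - U ** rdiag e ** cmat_adj U)" unfolding M_def by (rule norm_conj[OF V])
  have "zeta (d$i) \<le> (cmod (M$i$i))^2" for i
  proof -
    define y where "y = (\<Sum>k\<in>UNIV. e$k * (cmod (W$i$k))^2)"
    have y: "y \<ge> 0" unfolding y_def using e by (intro sum_nonneg) auto
    have "M$i$i = complex_of_real (d$i - y)"
      by (simp add: M conj_diag_entry y_def) (simp add: rdiag_def)
    then have "(cmod (M$i$i))^2 = (d$i - y)^2" by (simp flip: of_real_diff)
    then show ?thesis using zeta_le[OF y] by simp
  qed
  then have "(\<Sum>i\<in>UNIV. zeta (d$i)) \<le> (\<Sum>i\<in>UNIV. (cmod (M$i$i))^2)" by (rule sum_mono)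
  also have "\<dots> \<le> (norm M)^2" by (rule diag_le_norm)
  finally show ?thesis using nM by simp
qed

lemma exact:
  assumes U: "unitary U" and A: "A = U ** rdiag d ** cmat_adj U"
  shows "(norm (A - U ** rdiag (\<chi> i. max (d$i) 0) ** cmat_adj U))^2 = (\<Sum>i\<in>UNIV. zeta (d$i))"
proof -
  have "A - U ** rdiag (\<chi> i. max (d$i) 0) ** cmat_adj U = U ** rdiag (d - (\<chi> i. max (d$i) 0)) ** cmat_adj U"
    unfolding A by (rule conj_diff)
  then have "(norm (A - U ** rdiag (\<chi> i. max (d$i) 0) ** cmat_adj U))^2 = (\<Sum>i\<in>UNIV. (d$i - max (d$i) 0)^2)"
    by (simp add: norm_conj'[OF U] norm_rdiag)
  also have "\<dots> = (\<Sum>i\<in>UNIV. zeta (d$i))"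
    by (intro sum.cong) (auto simp: zeta_def max_def)
  finally show ?thesis .
qed

lemma matfun_trace:
  assumes "hermitian A"
  shows "\<exists>U d. unitary U \<and> A = U ** rdiag d ** cmat_adj U \<and>
           trace (matfun f A) = (\<Sum>i\<in>UNIV. complex_of_real (f (d$i)))"
proof -
  have ex: "\<exists>B. \<exists>U d. unitary U \<and> A = U ** rdiag d ** cmat_adj U \<and>
                          B = U ** rdiag (\<chi> i. f (d $ i)) ** cmat_adj U"
    using spectral[OF assms] by blast
  have "\<exists>U d. unitary U \<and> A = U ** rdiag d ** cmat_adj U \<and>
                          matfun f A = U ** rdiag (\<chi> i. f (d $ i)) ** cmat_adj U"
    unfolding matfun_def by (rule someI_ex[OF ex])
  then obtain U d where "unitary U" "A = U ** rdiag d ** cmat_adj U"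
      "matfun f A = U ** rdiag (\<chi> i. f (d $ i)) ** cmat_adj U" by blast
  then show ?thesis using trace_conj by fastforce
qed

lemma real_final:
  fixes a b q pn :: real
  assumes "0 \<le> a" "0 \<le> b" "0 \<le> q" "b \<le> a + q" "a \<le> b + q" "a \<le> pn"
  shows "\<bar>b^2 - a^2\<bar> \<le> 2 * (pn * q + q^2)"
proof -
  have "\<bar>b - a\<bar> \<le> q" using assms by linarith
  moreover have "b + a \<le> 2 * pn + q" using assms by linarith
  ultimately have "\<bar>b - a\<bar> * (b + a) \<le> q * (2 * pn + q)"
    using assms by (intro mult_mono) auto
  moreover have "\<bar>b^2 - a^2\<bar> = \<bar>b - a\<bar> * (b + a)"
  proof -
    have "b^2 - a^2 = (b - a) * (b + a)" by (simp add: power2_eq_square algebra_simps)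
    then show ?thesis using assms by (simp add: abs_mult)
  qed
  moreover have e: "q * (2*pn + q) = 2*(pn*q) + q^2" by (simp add: power2_eq_square algebra_simps)
  moreover have "0 \<le> q^2" by simp
  ultimately show ?thesis by (smt (verit))
qed

theorem lemma10p4:
  fixes P Q :: "complex^'n^'n"
  assumes "hermitian P" and "hermitian Q"
  shows "cmod (trace (matfun zeta (P + Q) - matfun zeta P))
           \<le> 2 * (frob P * frob Q + (frob Q)^2)"
proof -
  have hPQ: "hermitian (P + Q)" using assms by (simp add: hermitian_def adj_add)
  obtain U p where U: "unitary U" "P = U ** rdiag p ** cmat_adj U"
    and tP: "trace (matfun zeta P) = (\<Sum>i\<in>UNIV. complex_of_real (zeta (p$i)))"
    using matfun_trace[OF assms(1)] by blast
  obtain V s where V: "unitary V" "P + Q = V ** rdiag s ** cmat_adj V"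
    and tPQ: "trace (matfun zeta (P + Q)) = (\<Sum>i\<in>UNIV. complex_of_real (zeta (s$i)))"
    using matfun_trace[OF hPQ] by blast
  define t0 where "t0 = (\<Sum>i\<in>UNIV. zeta (p$i))"
  define t1 where "t1 = (\<Sum>i\<in>UNIV. zeta (s$i))"
  have tr: "trace (matfun zeta (P + Q) - matfun zeta P) = complex_of_real (t1 - t0)"
    by (simp add: trace_sub tPQ tP t0_def t1_def)
  define X where "X = U ** rdiag (\<chi> i. max (p$i) 0) ** cmat_adj U"
  define Y where "Y = V ** rdiag (\<chi> i. max (s$i) 0) ** cmat_adj V"
  define a where "a = norm (P - X)"
  define b where "b = norm (P + Q - Y)"
  have h0: "a^2 = t0" unfolding a_def X_def t0_def by (rule exact[OF U])
  have h1: "b^2 = t1" unfolding b_def Y_def t1_def by (rule exact[OF V])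
  have l1: "t1 \<le> (norm (P + Q - X))^2" unfolding t1_def X_def
    by (rule lower[OF V U(1)]) auto
  have l0: "t0 \<le> (norm (P - Y))^2" unfolding t0_def Y_def
    by (rule lower[OF U V(1)]) auto
  have lP: "t0 \<le> (norm (P - U ** rdiag 0 ** cmat_adj U))^2" unfolding t0_def
    by (rule lower[OF U U(1)]) auto
  have "b^2 \<le> (norm (P + Q - X))^2" using h1 l1 by simp
  then have "b \<le> norm (P + Q - X)" by (rule power2_le_imp_le) simp
  also have "P + Q - X = (P - X) + Q" by simp
  also have "norm \<dots> \<le> a + norm Q" unfolding a_def by (rule norm_triangle_ineq)
  finally have 1: "b \<le> a + norm Q" .
  have "a^2 \<le> (norm (P - Y))^2" using h0 l0 by simp
  then have "a \<le> norm (P - Y)" by (rule power2_le_imp_le) simp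
  also have "P - Y = (P + Q - Y) - Q" by simp
  also have "norm \<dots> \<le> b + norm Q" unfolding b_def by (rule norm_triangle_ineq4)
  finally have 2: "a \<le> b + norm Q" .
  have "a^2 \<le> (norm P)^2" using h0 lP by (simp add: rdiag_zero)
  then have 3: "a \<le> norm P" by (rule power2_le_imp_le) simp
  have "\<bar>b^2 - a^2\<bar> \<le> 2 * (norm P * norm Q + (norm Q)^2)"
    by (rule real_final) (use 1 2 3 in \<open>auto simp: a_def b_def\<close>)
  then show ?thesis by (simp add: tr frob_eq h0 h1 flip: of_real_diff)
qed

end
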